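(* Let $B\ge1$ and $\mathcal{E}>0$. Let $\widetilde{\mathbf{t}}=(\widetilde t_0,\dots,\widetilde t_{B-1})$ be the optimal solution of $$\text{minimize}_{\mathbf{t}}\ \sum_{b=0}^{B-1}4^b\exp(-2t_b)\quad\text{subject to}\quad\sum_{b=0}^{B-1}4t_b\le\mathcal{E},\ \ t_b\ge0,$$ (i.e. the duration subproblem with currents fixed at $i_b=2$), which is given by $\widetilde t_b=0$ if $\nu\ge 4^b/2$ and $\widetilde t_b=\tfrac12\log\bigl(\tfrac{1}{\nu}\cdot\tfrac{4^b}{2}\bigr)$ otherwise, with $\nu$ the dual variable of the energy constraint. If $\mathcal{E}>2B(B-1)\log 2$, then $\widetilde t_b>0$ for all $b\in\{0,\dots,B-1\}$ and $$\widetilde t_b=\frac{\mathcal{E}}{4B}+\Bigl(b-\frac{B-1}{2}\Bigr)\log 2.$$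
   Context: $\log$ denotes the natural logarithm. *)

theory Defs
  imports Complex_Main
begin

definition dur_obj :: "nat \<Rightarrow> (nat \<Rightarrow> real) \<Rightarrow> real" where
  "dur_obj B t = (\<Sum>b<B. 4 ^ b * exp (- 2 * t b))"

definition dur_feasible :: "nat \<Rightarrow> real \<Rightarrow> (nat \<Rightarrow> real) \<Rightarrow> bool" where
  "dur_feasible B E t \<longleftrightarrow> (\<Sum>b<B. 4 * t b) \<le> E \<and> (\<forall>b<B. t b \<ge> 0)"

definition dur_optimal :: "nat \<Rightarrow> real \<Rightarrow> (nat \<Rightarrow> real) \<Rightarrow> bool" where
  "dur_optimal B E t \<longleftrightarrow> dur_feasible B E t \<and>
     (\<forall>s. dur_feasible B E s \<longrightarrow> dur_obj B t \<le> dur_obj B s)"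

end

theory Submission imports Defs begin
lemma exp_strict: fixes x :: real assumes "x \<noteq> 0" shows "1 + x < exp x"
proof (cases "1 + x/2 \<ge> 0")
  case True
  have "(1 + x/2)^2 \<le> exp (x/2) ^ 2"
    using True exp_ge_add_one_self[of "x/2"] by (intro power_mono) auto
  also have "exp (x/2) ^ 2 = exp x" by (simp flip: exp_double)
  finally have "(1 + x/2)^2 \<le> exp x" .
  moreover have "(1 + x/2)^2 = 1 + x + x^2/4" by (simp add: power2_eq_square algebra_simps)
  moreover have "x^2 > 0" using assms by simp
  ultimately show ?thesis by linarith
next
  case False
  then have "1 + x < 0" by linarith
  then show ?thesis using exp_gt_zero[of x] by linarith
qed

lemma sum_nat_real: "(\<Sum>b<n. 2 * real b) = real n * (real n - 1)"
  by (induction n) (auto simp: algebra_simps)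

theorem lemma3:
  fixes B :: nat and E :: real and t :: "nat \<Rightarrow> real"
  assumes "B \<ge> 1" and "E > 0"
    and "dur_optimal B E t"
    and "E > 2 * real B * (real B - 1) * ln 2"
  shows "\<forall>b<B. t b > 0 \<and> t b = E / (4 * real B) + (real b - (real B - 1) / 2) * ln 2"
proof -
  define ts where "ts b = E / (4 * real B) + (real b - (real B - 1) / 2) * ln 2" for b
  define c where "c = exp (-2 * ts 0)"
  have Bpos: "real B > 0" using assms(1) by simp
  have ts0: "ts 0 > 0"
  proof -
    have "(real B - 1) / 2 * ln 2 < E / (4 * real B)"
      using assms(4) Bpos by (simp add: field_simps)
    then show ?thesis unfolding ts_def by simp
  qed
  have tspos: "ts b > 0" for b
  proof -
    have "ts b = ts 0 + real b * ln 2" unfolding ts_def by (simp add: algebra_simps)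
    moreover have "real b * ln 2 \<ge> 0" by simp
    ultimately show ?thesis using ts0 by linarith
  qed
  have cb: "4 ^ b * exp (-2 * ts b) = c" for b
  proof -
    have l4: "ln (4::real) = 2 * ln 2" using ln_realpow[of 2 2] by simp
    have "-2 * ts b = -2 * ts 0 - real b * ln 4"
      unfolding ts_def l4 by (simp add: algebra_simps)
    then have "exp (-2 * ts b) = c / exp (real b * ln 4)"
      unfolding c_def by (simp add: exp_diff)
    also have "exp (real b * ln 4) = 4 ^ b" by (simp add: exp_of_nat_mult)
    finally show ?thesis by simp
  qed
  have sumts: "(\<Sum>b<B. 4 * ts b) = E"
  proof -
    have "(\<Sum>b<B. 4 * ts b) = (\<Sum>b<B. E / real B + (2 * real b) * (2 * ln 2) - 2 * (real B - 1) * ln 2)"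
      unfolding ts_def using Bpos by (intro sum.cong) (auto simp: field_simps)
    also have "\<dots> = E + (\<Sum>b<B. 2 * real b) * (2 * ln 2) - 2 * real B * (real B - 1) * ln 2"
      using Bpos by (simp add: sum.distrib sum_subtractf sum_distrib_right)
    also have "\<dots> = E" by (simp add: sum_nat_real)
    finally show ?thesis .
  qed
  have tsfeas: "dur_feasible B E ts"
    unfolding dur_feasible_def using sumts tspos by (auto intro: less_imp_le)
  have cpos: "c > 0" unfolding c_def by simp
  have e: "4 ^ b * exp (-2 * s) = c * exp (-2 * (s - ts b))" for s b
  proof -
    have "exp (-2 * s) = exp (-2 * ts b) * exp (-2 * (s - ts b))"
      by (simp add: exp_add[symmetric] algebra_simps)
    then show ?thesis by (simp flip: cb[of b] add: mult.assoc)
  qed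
  have lin: "4 ^ b * exp (-2 * s) \<ge> c * (1 - 2 * (s - ts b))" for s b
  proof -
    have "exp (-2 * (s - ts b)) \<ge> 1 - 2 * (s - ts b)"
      using exp_ge_add_one_self[of "-2 * (s - ts b)"] by linarith
    then show ?thesis unfolding e using cpos by (simp add: mult_left_mono)
  qed
  have slin: "4 ^ b * exp (-2 * s) > c * (1 - 2 * (s - ts b))" if "s \<noteq> ts b" for s b
  proof -
    have "exp (-2 * (s - ts b)) > 1 - 2 * (s - ts b)"
      using exp_strict[of "-2 * (s - ts b)"] that by fastforce
    then show ?thesis unfolding e using cpos by simp
  qed
  have objts: "dur_obj B ts = real B * c" unfolding dur_obj_def using cb by simp
  have lsum: "(\<Sum>b<B. c * (1 - 2 * (t b - ts b))) \<ge> real B * c"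
  proof -
    have "(\<Sum>b<B. c * (1 - 2 * (t b - ts b))) = real B * c - c / 2 * ((\<Sum>b<B. 4 * t b) - (\<Sum>b<B. 4 * ts b))"
      by (simp add: sum_subtractf sum_distrib_left sum.distrib algebra_simps)
    moreover have "(\<Sum>b<B. 4 * t b) \<le> E" using assms(3) unfolding dur_optimal_def dur_feasible_def by simp
    moreover have "c > 0" unfolding c_def by simp
    ultimately show ?thesis using sumts by (simp add: mult_nonneg_nonpos)
  qed
  have "t b = ts b" if "b < B" for b
  proof (rule ccontr)
    assume ne: "t b \<noteq> ts b"
    have "(\<Sum>b<B. c * (1 - 2 * (t b - ts b))) < dur_obj B t"
      unfolding dur_obj_def
      by (rule sum_strict_mono_ex1) (use lin slin[OF ne] that in auto)
    moreover have "dur_obj B t \<le> dur_obj B ts"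
      using assms(3) tsfeas unfolding dur_optimal_def by blast
    ultimately show False using lsum objts by linarith
  qed
  then show ?thesis using tspos unfolding ts_def by auto
qed
end
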